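(* Set $L = (n-1)(r-1) +1$. Then the following equality holds in $E_n(L)$: \begin{equation*} \sum_{k = 0}^L(-1)^k\begin{bmatrix} L \\ k \end{bmatrix}(k, 0, \dots, 0, L - k) = 0. \end{equation*}
   Context: Let $q$ be an indeterminate, $[n] = \frac{q^n - q^{-n}}{q - q^{-1}}$ for $n \in \mathbb{Z}$, $[m]^! = [1]\cdots[m]$, and for $n \in \mathbb{Z}$, $m \in \mathbb{N}$, $\begin{bmatrix} n \\ m\end{bmatrix} = \frac{[n][n-1]\cdots[n-m+1]}{[m]^!}$ for $m \ge 1$, $\begin{bmatrix} n \\ 0\end{bmatrix} = 1$. Fix an integer $r \ge 2$ and $n \ge 2$. Let $V_n$ be the vector space over $\mathbb{Q}(q)$ spanned by symbols $a = (a_1, \dots, a_n) \in \mathbb{N}^n$ subject to the relations: for $1 \le i \le n-1$, if $a_i \ge r$ then $\sum_{0 \le j \le r}(-1)^j\begin{bmatrix} r \\ j\end{bmatrix} a(j) = 0$, where $a(j) = (a_1, \dots, a_{i-1}, a_i - j, a_{i+1} + j, a_{i+2}, \dots, a_n)$. For $m \ge 1$, $E_n(m)$ denotes the subspace of $V_n$ spanned by $\{ a = (a_1, \dots, a_n) \mid \sum_i a_i = m,\ a_i \in [0, r-1] \text{ for } 1 \le i < n\}$; every $a \in V_n$ with $\sum a_i = m$ lies in $E_n(m)$. *)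

theory Defs
  imports "HOL-Computational_Algebra.Polynomial" "HOL-Computational_Algebra.Fraction_Field"
begin

type_synonym qfield = "rat poly fract"

definition qq :: qfield where "qq = Fract [:0, 1:] 1"

definition qint :: "int \<Rightarrow> qfield" where
  "qint k = (qq powi k - qq powi (-k)) / (qq - inverse qq)"

definition qfact :: "nat \<Rightarrow> qfield" where
  "qfact m = (\<Prod>t\<in>{1..m}. qint (int t))"

definition qbinom :: "int \<Rightarrow> nat \<Rightarrow> qfield" where
  "qbinom k m = (if m = 0 then 1 else (\<Prod>t<m. qint (k - int t)) / qfact m)"

text \<open>Symbols a in N^n are lists of length n; positions are 0-indexed, so the
  paper's index i (1 \<le> i \<le> n-1) corresponds to i-1 here.
  a(j) = (a_1,...,a_i - j, a_{i+1} + j, ..., a_n).\<close>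
definition shift :: "nat list \<Rightarrow> nat \<Rightarrow> nat \<Rightarrow> nat list" where
  "shift a i j = a[i := a ! i - j, Suc i := a ! Suc i + j]"

text \<open>Formal linear combinations of symbols are functions nat list \<Rightarrow> Q(q)
  (finitely supported in all uses below). The defining relation for (a,i):\<close>
definition rel_vec :: "nat \<Rightarrow> nat list \<Rightarrow> nat \<Rightarrow> nat list \<Rightarrow> qfield" where
  "rel_vec r a i = (\<lambda>b. \<Sum>j\<le>r. (-1) ^ j * qbinom (int r) j * (if b = shift a i j then 1 else 0))"

definition valid_rel :: "nat \<Rightarrow> nat \<Rightarrow> nat list \<Rightarrow> nat \<Rightarrow> bool" where
  "valid_rel n r a i \<longleftrightarrow> length a = n \<and> Suc i < n \<and> r \<le> a ! i"

definition zero_in_V :: "nat \<Rightarrow> nat \<Rightarrow> (nat list \<Rightarrow> qfield) \<Rightarrow> bool" where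
  "zero_in_V n r v \<longleftrightarrow> (\<exists>G c. finite G \<and> (\<forall>(a, i)\<in>G. valid_rel n r a i) \<and>
      (\<forall>b. v b = (\<Sum>(a, i)\<in>G. c (a, i) * rel_vec r a i b)))"

end

theory Submission
  imports Defs
begin


lemma qq_ne0: "qq \<noteq> 0"
  unfolding qq_def by (simp add: eq_fract Zero_fract_def)

lemma qq_pow: "qq ^ m = Fract ([:0,1:] ^ m) 1"
  unfolding qq_def by (induction m) (auto simp: power_Suc mult.commute One_fract_def)

lemma qq_pow_ne1: "m > 0 \<Longrightarrow> qq ^ m \<noteq> 1"
proof
  assume "m > 0" "qq ^ m = 1"
  then have "Fract ([:0,1:] ^ m) 1 = (Fract 1 1 :: qfield)" by (metis qq_pow One_fract_def)
  then have "([:0,1:]::rat poly) ^ m = 1" by (simp add: eq_fract)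
  then have "degree (([:0,1:]::rat poly) ^ m) = 0" by simp
  with \<open>m>0\<close> show False by (simp add: degree_power_eq)
qed

lemma qD_ne0: "qq - inverse qq \<noteq> 0"
proof
  assume "qq - inverse qq = 0"
  then have "qq * qq = qq * inverse qq" by simp
  then have "qq ^ 2 = 1" using qq_ne0 by (simp add: power2_eq_square)
  with qq_pow_ne1[of 2] show False by simp
qed

lemma powi_mult_qq: "qq powi a * qq powi b = qq powi (a + b)"
  using qq_ne0 by (simp add: power_int_add)

lemma qint_0: "qint 0 = 0" by (simp add: qint_def)

lemma qint_ne0: assumes "k > 0" shows "qint k \<noteq> 0"
proof
  assume "qint k = 0"
  then have "qq powi k = qq powi (-k)" using qD_ne0 by (simp add: qint_def)
  then have "qq powi k * qq powi k = qq powi (-k) * qq powi k" by simp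
  then have "qq powi (k + k) = 1" by (simp add: powi_mult_qq)
  then have "qq ^ (nat (k+k)) = 1" using assms by (simp add: power_int_def)
  with qq_pow_ne1[of "nat (k+k)"] assms show False by simp
qed

lemma qint_id: "qint (c+1) = qq powi (-j) * qint (c + 1 - j) + qq powi (c + 1 - j) * qint j"
proof -
  have e1: "qq powi (-j) * qq powi (c + 1 - j) = qq powi (c+1-2*j)" by (simp add: powi_mult_qq)
  have e2: "qq powi (-j) * qq powi (-(c + 1 - j)) = qq powi (-(c+1))" by (simp add: powi_mult_qq)
  have e2': "qq powi (-j) * qq powi (j - (c+1)) = qq powi (-c-1)" by (simp add: powi_mult_qq)
  have e3: "qq powi (c + 1 - j) * qq powi j = qq powi (c+1)" by (simp add: powi_mult_qq)
  have e4: "qq powi (c + 1 - j) * qq powi (-j) = qq powi (c+1-2*j)" by (simp add: powi_mult_qq)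
  have "qq powi (c+1) - qq powi (-(c+1)) = qq powi (-j) * (qq powi (c + 1 - j) - qq powi (-(c+1-j)))
     + qq powi (c+1-j) * (qq powi j - qq powi (-j))"
    by (simp add: right_diff_distrib e1 e2 e2' e3 e4)
  moreover have "\<And>a b x y d. a * (x / d) + b * (y / d) = (a * x + b * y) / (d::qfield)"
    by (simp add: add_divide_distrib)
  ultimately show ?thesis unfolding qint_def by metis
qed



lemma qbinom_0[simp]: "qbinom k 0 = 1" by (simp add: qbinom_def)

lemma qfact_0[simp]: "qfact 0 = 1" by (simp add: qfact_def)

lemma qfact_Suc: "qfact (Suc m) = qfact m * qint (int m + 1)"
  by (simp add: qfact_def prod.cl_ivl_Suc add.commute)

lemma qfact_ne0: "qfact m \<noteq> 0"
  by (induction m) (auto simp: qfact_Suc qint_ne0)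

lemma qbinom_gt: assumes "c < j" shows "qbinom (int c) j = 0"
proof -
  have "(\<Prod>t<j. qint (int c - int t)) = 0"
    using assms by (intro prod_zero) (auto intro!: bexI[of _ c] simp: qint_0)
  then show ?thesis using assms by (simp add: qbinom_def)
qed

lemma qbinom_alt: "qbinom k i = (\<Prod>t<i. qint (k - int t)) / qfact i"
  by (simp add: qbinom_def)

lemma qbinom_pascal:
  "qbinom (int c + 1) (Suc i) = qq powi (-(int i+1)) * qbinom (int c) (Suc i) + qq powi (int c - int i) * qbinom (int c) i"
proof -
  define M where "M = (\<Prod>t<i. qint (int c - int t))"
  have P1: "(\<Prod>t<Suc i. qint (int c + 1 - int t)) = qint (int c + 1) * M"
    unfolding M_def by (subst prod.lessThan_Suc_shift) (simp add: algebra_simps)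
  have P2: "(\<Prod>t<Suc i. qint (int c - int t)) = M * qint (int c - int i)"
    unfolding M_def by simp
  have id: "qint (int c + 1) = qq powi (-(int i + 1)) * qint (int c - int i) + qq powi (int c - int i) * qint (int i + 1)"
    using qint_id[of "int c" "int i + 1"] by simp
  have F: "qfact i \<noteq> 0" "qint (int i + 1) \<noteq> 0" using qfact_ne0 qint_ne0 by auto
  have "qbinom (int c + 1) (Suc i) = qint (int c + 1) * M / (qfact i * qint (int i + 1))"
    unfolding qbinom_alt P1 qfact_Suc by (simp add: mult.commute)
  also have "\<dots> = (qq powi (-(int i + 1)) * qint (int c - int i) + qq powi (int c - int i) * qint (int i + 1)) * M / (qfact i * qint (int i + 1))"
    by (simp only: id[symmetric])
  also have "\<dots> = qq powi (-(int i+1)) * (M * qint (int c - int i) / (qfact i * qint (int i + 1))) + qq powi (int c - int i) * (M / qfact i)"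
    using F by (simp add: field_simps)
  also have "\<dots> = qq powi (-(int i+1)) * qbinom (int c) (Suc i) + qq powi (int c - int i) * qbinom (int c) i"
    unfolding qbinom_alt P2 qfact_Suc M_def[symmetric] by simp
  finally show ?thesis .
qed

definition Rp :: "nat \<Rightarrow> int \<Rightarrow> qfield poly" where
  "Rp c e = (\<Prod>k<c. [:1, -(qq powi (e + 2 * int k)):])"

lemma coeff_Rp: "coeff (Rp c e) j = (-1)^j * qq powi (int j * (e + int c - 1)) * qbinom (int c) j"
proof (induction c arbitrary: j)
  case 0
  then show ?case by (cases j) (auto simp: Rp_def qbinom_gt[of 0, simplified])
next
  case (Suc c)
  have R: "Rp (Suc c) e = Rp c e + pCons 0 (smult (-(qq powi (e + 2 * int c))) (Rp c e))"
    by (simp add: Rp_def mult_pCons_right)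
  show ?case
  proof (cases j)
    case 0
    then show ?thesis using Suc by (simp add: R)
  next
    case (Suc i)
    have x1: "qq powi (int (Suc i) * (e + int (Suc c) - 1)) * qq powi (-(int i+1)) = qq powi (int (Suc i) * (e + int c - 1))"
      by (simp add: powi_mult_qq algebra_simps)
    have x2: "qq powi (int (Suc i) * (e + int (Suc c) - 1)) * qq powi (int c - int i) = qq powi (e + 2 * int c) * qq powi (int i * (e + int c - 1))"
      by (simp add: powi_mult_qq algebra_simps)
    have "coeff (Rp (Suc c) e) j = coeff (Rp c e) (Suc i) - qq powi (e + 2 * int c) * coeff (Rp c e) i"
      by (simp add: R Suc)
    also have "\<dots> = (-1)^(Suc i) * (qq powi (int (Suc i) * (e + int c - 1)) * qbinom (int c) (Suc i)
        + qq powi (e + 2 * int c) * qq powi (int i * (e + int c - 1)) * qbinom (int c) i)"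
      by (simp only: Suc.IH) (simp add: algebra_simps)
    also have "\<dots> = (-1)^(Suc i) * qq powi (int (Suc i) * (e + int (Suc c) - 1)) * 
        (qq powi (-(int i+1)) * qbinom (int c) (Suc i) + qq powi (int c - int i) * qbinom (int c) i)"
      by (simp only: x1[symmetric] x2[symmetric]) (simp add: ring_distribs mult_ac)
    also have "\<dots> = (-1)^j * qq powi (int j * (e + int (Suc c) - 1)) * qbinom (int (Suc c)) j"
      using qbinom_pascal[of c i] by (simp add: Suc add.commute)
    finally show ?thesis .
  qed
qed



type_synonym p2 = "qfield poly poly"

definition c2 :: "p2 \<Rightarrow> nat \<Rightarrow> nat \<Rightarrow> qfield" where "c2 p s t = coeff (coeff p t) s"
definition XX :: p2 where "XX = [:[:0,1:]:]"
definition YY :: p2 where "YY = [:0,1:]"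
definition CC :: "qfield \<Rightarrow> p2" where "CC c = [:[:c:]:]"

lemma c2_add[simp]: "c2 (p + q) s t = c2 p s t + c2 q s t" by (simp add: c2_def)
lemma c2_diff[simp]: "c2 (p - q) s t = c2 p s t - c2 q s t" by (simp add: c2_def)
lemma c2_0[simp]: "c2 0 s t = 0" by (simp add: c2_def)
lemma c2_1: "c2 1 s t = (if s = 0 \<and> t = 0 then 1 else 0)" by (simp add: c2_def coeff_1)
lemma c2_C[simp]: "c2 (CC c * p) s t = c * c2 p s t"
  by (simp add: c2_def CC_def)
lemma c2_X[simp]: "c2 (XX * p) s t = (if s = 0 then 0 else c2 p (s-1) t)"
  by (cases s) (simp_all add: c2_def XX_def coeff_pCons)
lemma c2_Y[simp]: "c2 (YY * p) s t = (if t = 0 then 0 else c2 p s (t-1))"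
  by (cases t) (simp_all add: c2_def YY_def)
lemma CC_mult: "CC a * CC b = CC (a * b)" by (simp add: CC_def)

definition Rx :: "nat \<Rightarrow> int \<Rightarrow> p2" where
  "Rx a e = (\<Prod>k<a. 1 - CC (qq powi (e + 2 * int k)) * XX)"
definition Ry :: "nat \<Rightarrow> int \<Rightarrow> p2" where
  "Ry a e = (\<Prod>k<a. 1 - CC (qq powi (e + 2 * int k)) * YY)"
definition Rxy :: "nat \<Rightarrow> int \<Rightarrow> p2" where
  "Rxy a e = (\<Prod>k<a. 1 - CC (qq powi (e + 2 * int k)) * XX * YY)"

lemma Rx_Suc: "Rx (Suc a) e = (1 - CC (qq powi e) * XX) * Rx a (e + 2)"
  unfolding Rx_def by (subst prod.lessThan_Suc_shift) (simp add: algebra_simps)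
lemma Ry_Suc: "Ry (Suc a) e = (1 - CC (qq powi e) * YY) * Ry a (e + 2)"
  unfolding Ry_def by (subst prod.lessThan_Suc_shift) (simp add: algebra_simps)
lemma Rxy_Suc: "Rxy (Suc a) e = (1 - CC (qq powi e) * XX * YY) * Rxy a (e + 2)"
  unfolding Rxy_def by (subst prod.lessThan_Suc_shift) (simp add: algebra_simps)

lemma Rp_Suc': "Rp (Suc c) e = Rp c e + pCons 0 (smult (-(qq powi (e + 2 * int c))) (Rp c e))"
  by (simp add: Rp_def mult_pCons_right)

lemma c2_Rx: "c2 (Rx a e) s t = (if t = 0 then coeff (Rp a e) s else 0)"
proof (induction a arbitrary: s t)
  case 0
  then show ?case by (simp add: Rx_def Rp_def c2_1)
next
  case (Suc a)
  have "Rx (Suc a) e = Rx a e - CC (qq powi (e + 2 * int a)) * (XX * Rx a e)"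
    by (simp add: Rx_def algebra_simps)
  then show ?case using Suc by (cases s) (simp_all add: Rp_Suc')
qed

lemma c2_Ry: "c2 (Ry a e) s t = (if s = 0 then coeff (Rp a e) t else 0)"
proof (induction a arbitrary: s t)
  case 0
  then show ?case by (simp add: Ry_def Rp_def c2_1)
next
  case (Suc a)
  have "Ry (Suc a) e = Ry a e - CC (qq powi (e + 2 * int a)) * (YY * Ry a e)"
    by (simp add: Ry_def algebra_simps)
  then show ?case using Suc by (cases t) (simp_all add: Rp_Suc')
qed

lemma c2_Rxy: "c2 (Rxy a e) s t = (if s = t then coeff (Rp a e) s else 0)"
proof (induction a arbitrary: s t)
  case 0
  then show ?case by (simp add: Rxy_def Rp_def c2_1)
next
  case (Suc a)
  have "Rxy (Suc a) e = Rxy a e - CC (qq powi (e + 2 * int a)) * (XX * (YY * Rxy a e))"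
    by (simp add: Rxy_def algebra_simps)
  then show ?case using Suc by (cases s; cases t) (simp_all add: Rp_Suc')
qed

lemma coeff_Rp_gt: "c < j \<Longrightarrow> coeff (Rp c e) j = 0"
  by (simp add: coeff_Rp qbinom_gt)

lemma coeff_Rp_le: "coeff (Rp c e) s \<noteq> 0 \<Longrightarrow> s \<le> c"
  using coeff_Rp_gt[of c s e] by (cases "c < s") auto

lemma ring_aux:
  fixes x y u v A1 B1 A2 B2 R S :: "'a::comm_ring_1"
  shows "(1 - u*x) * (A1 * R + B1 * ((1 - v*y) * S)) + u*x*(1 - v*y) * (A2 * ((1-u*x)*R) + B2*S)
    = (A1 + u*(x*A2) - (u*v)*(x*(y*A2))) * ((1-u*x)*R) + (B1 - u*(x*B1) + u*(x*B2)) * ((1 - v*y) * S)"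
  by (simp add: algebra_simps)

lemma twovar:
  assumes "1 \<le> a + b"
  shows "\<exists>A B. Rxy (a + b - 1) (e + f) = A * Rx a e + B * Ry b f
     \<and> (\<forall>s t. c2 A s t \<noteq> 0 \<longrightarrow> t \<le> s \<and> s < b)
     \<and> (\<forall>s t. c2 B s t \<noteq> 0 \<longrightarrow> t + b \<le> s \<and> s < a + b)"
  using assms
proof (induction "a + b" arbitrary: a b e f rule: less_induct)
  case less
  show ?case
  proof (cases "a = 0")
    case True
    show ?thesis
      apply (rule exI[of _ "Rxy (a + b - 1) (e + f)"], rule exI[of _ 0])
      using True less.prems by (auto simp: Rx_def c2_Rxy split: if_splits dest!: coeff_Rp_le)
  next
    case a: False
    show ?thesis
    proof (cases "b = 0")
      case True
      show ?thesis
        apply (rule exI[of _ 0], rule exI[of _ "Rxy (a + b - 1) (e + f)"])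
        using True a by (auto simp: Ry_def c2_Rxy split: if_splits dest!: coeff_Rp_le)
    next
      case b: False
      obtain a' b' where ab: "a = Suc a'" "b = Suc b'" using a b not0_implies_Suc by blast
      obtain A1 B1 where H1: "Rxy (a' + b - 1) (e + 2 + f) = A1 * Rx a' (e+2) + B1 * Ry b f"
        and SA1: "\<forall>s t. c2 A1 s t \<noteq> 0 \<longrightarrow> t \<le> s \<and> s < b"
        and SB1: "\<forall>s t. c2 B1 s t \<noteq> 0 \<longrightarrow> t + b \<le> s \<and> s < a' + b"
        using less.hyps[of a' b "e+2" f] ab by auto
      obtain A2 B2 where H2: "Rxy (a + b' - 1) (e + (f + 2)) = A2 * Rx a e + B2 * Ry b' (f+2)"
        and SA2: "\<forall>s t. c2 A2 s t \<noteq> 0 \<longrightarrow> t \<le> s \<and> s < b'"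
        and SB2: "\<forall>s t. c2 B2 s t \<noteq> 0 \<longrightarrow> t + b' \<le> s \<and> s < a + b'"
        using less.hyps[of a b' e "f+2"] ab by auto
      define E where "E = Rxy (a' + b') (e + f + 2)"
      define A where "A = A1 + CC (qq powi e) * (XX * A2) - CC (qq powi e * qq powi f) * (XX * (YY * A2))"
      define B where "B = B1 - CC (qq powi e) * (XX * B1) + CC (qq powi e) * (XX * B2)"
      have E1: "E = A1 * Rx a' (e+2) + B1 * ((1 - CC (qq powi f) * YY) * Ry b' (f + 2))"
        using H1 ab by (simp add: E_def Ry_Suc add_ac)
      have E2: "E = A2 * ((1 - CC (qq powi e) * XX) * Rx a' (e + 2)) + B2 * Ry b' (f+2)"
        using H2 ab by (simp add: E_def Rx_Suc add_ac)
      have split: "1 - CC (qq powi (e + f)) * XX * YY = (1 - CC (qq powi e) * XX) + CC (qq powi e) * XX * (1 - CC (qq powi f) * YY)"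
        by (simp add: right_diff_distrib mult.assoc CC_mult[symmetric] powi_mult_qq[symmetric])
      have "Rxy (a + b - 1) (e + f) = (1 - CC (qq powi (e + f)) * XX * YY) * E"
        using ab by (simp add: E_def Rxy_Suc)
      also have "\<dots> = (1 - CC (qq powi e) * XX) * E + CC (qq powi e) * XX * (1 - CC (qq powi f) * YY) * E"
        by (simp only: split distrib_right)
      also have "\<dots> = (1 - CC (qq powi e) * XX) * (A1 * Rx a' (e+2) + B1 * ((1 - CC (qq powi f) * YY) * Ry b' (f + 2)))
          + CC (qq powi e) * XX * (1 - CC (qq powi f) * YY) * (A2 * ((1 - CC (qq powi e) * XX) * Rx a' (e + 2)) + B2 * Ry b' (f+2))"
        by (metis E1 E2)
      also have "\<dots> = A * Rx a e + B * Ry b f"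
        unfolding A_def B_def ab Rx_Suc Ry_Suc CC_mult[symmetric] by (rule ring_aux)
      finally have eq: "Rxy (a + b - 1) (e + f) = A * Rx a e + B * Ry b f" .
      have sA: "t \<le> s \<and> s < b" if "c2 A s t \<noteq> 0" for s t
      proof -
        have "c2 A1 s t \<noteq> 0 \<or> (s > 0 \<and> c2 A2 (s-1) t \<noteq> 0) \<or> (s > 0 \<and> t > 0 \<and> c2 A2 (s-1) (t-1) \<noteq> 0)"
          using that by (auto simp: A_def split: if_splits)
        then show ?thesis
        proof (elim disjE)
          assume "c2 A1 s t \<noteq> 0" then show ?thesis using SA1 by blast
        next
          assume "0 < s \<and> c2 A2 (s - 1) t \<noteq> 0" then show ?thesis using SA2[rule_format, of "s-1" t] ab by auto
        next
          assume "0 < s \<and> 0 < t \<and> c2 A2 (s - 1) (t - 1) \<noteq> 0" then show ?thesis using SA2[rule_format, of "s-1" "t-1"] ab by auto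
        qed
      qed
      have sB: "t + b \<le> s \<and> s < a + b" if "c2 B s t \<noteq> 0" for s t
      proof -
        have "c2 B1 s t \<noteq> 0 \<or> (s > 0 \<and> c2 B1 (s-1) t \<noteq> 0) \<or> (s > 0 \<and> c2 B2 (s-1) t \<noteq> 0)"
          using that by (auto simp: B_def split: if_splits)
        then show ?thesis
        proof (elim disjE)
          assume "c2 B1 s t \<noteq> 0" then show ?thesis using SB1 ab by fastforce
        next
          assume "0 < s \<and> c2 B1 (s - 1) t \<noteq> 0" then show ?thesis using SB1[rule_format, of "s-1" t] ab by auto
        next
          assume "0 < s \<and> c2 B2 (s - 1) t \<noteq> 0" then show ?thesis using SB2[rule_format, of "s-1" t] ab by auto
        qed
      qed
      show ?thesis using eq sA sB by blast
    qed
  qed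
qed



lemma zV_alt: "zero_in_V n r v \<longleftrightarrow> (\<exists>G c. finite G \<and> (\<forall>p\<in>G. valid_rel n r (fst p) (snd p)) \<and>
      (\<forall>b. v b = (\<Sum>p\<in>G. c p * rel_vec r (fst p) (snd p) b)))"
  unfolding zero_in_V_def by (simp add: split_def)

lemma zV_zero: "zero_in_V n r (\<lambda>_. 0)"
  unfolding zV_alt by (rule exI[of _ "{}"]) auto

lemma zV_rel: "valid_rel n r a i \<Longrightarrow> zero_in_V n r (rel_vec r a i)"
  unfolding zV_alt by (rule exI[of _ "{(a,i)}"], rule exI[of _ "\<lambda>_. 1"]) auto

lemma zV_add:
  assumes "zero_in_V n r u" "zero_in_V n r v"
  shows "zero_in_V n r (\<lambda>w. u w + v w)"
proof -
  obtain G1 c1 where 1: "finite G1" "\<forall>p\<in>G1. valid_rel n r (fst p) (snd p)"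
    "\<forall>b. u b = (\<Sum>p\<in>G1. c1 p * rel_vec r (fst p) (snd p) b)" using assms(1) unfolding zV_alt by blast
  obtain G2 c2 where 2: "finite G2" "\<forall>p\<in>G2. valid_rel n r (fst p) (snd p)"
    "\<forall>b. v b = (\<Sum>p\<in>G2. c2 p * rel_vec r (fst p) (snd p) b)" using assms(2) unfolding zV_alt by blast
  let ?c = "\<lambda>p. (if p \<in> G1 then c1 p else 0) + (if p \<in> G2 then c2 p else 0)"
  have "u b + v b = (\<Sum>p\<in>G1 \<union> G2. ?c p * rel_vec r (fst p) (snd p) b)" for b
  proof -
    have "(\<Sum>p\<in>G1 \<union> G2. ?c p * rel_vec r (fst p) (snd p) b) =
      (\<Sum>p\<in>G1 \<union> G2. (if p \<in> G1 then c1 p * rel_vec r (fst p) (snd p) b else 0)) +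
      (\<Sum>p\<in>G1 \<union> G2. (if p \<in> G2 then c2 p * rel_vec r (fst p) (snd p) b else 0))"
      by (simp only: sum.distrib[symmetric]) (auto intro!: sum.cong simp: distrib_right)
    also have "\<dots> = (\<Sum>p\<in>G1. c1 p * rel_vec r (fst p) (snd p) b) + (\<Sum>p\<in>G2. c2 p * rel_vec r (fst p) (snd p) b)"
      using 1(1) 2(1) by (simp add: sum.inter_restrict[symmetric] Int_absorb1 Int_absorb2 Int_commute)
    finally show ?thesis using 1(3) 2(3) by simp
  qed
  then show ?thesis unfolding zV_alt using 1 2 by (intro exI[of _ "G1 \<union> G2"] exI[of _ ?c]) auto
qed

lemma zV_scale:
  assumes "zero_in_V n r u"
  shows "zero_in_V n r (\<lambda>w. k * u w)"
proof -
  obtain G c where 1: "finite G" "\<forall>p\<in>G. valid_rel n r (fst p) (snd p)"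
    "\<forall>b. u b = (\<Sum>p\<in>G. c p * rel_vec r (fst p) (snd p) b)" using assms unfolding zV_alt by blast
  show ?thesis unfolding zV_alt using 1
    by (intro exI[of _ G] exI[of _ "\<lambda>p. k * c p"]) (auto simp: sum_distrib_left mult.assoc)
qed

lemma zV_cong: "zero_in_V n r u \<Longrightarrow> (\<And>w. u w = v w) \<Longrightarrow> zero_in_V n r v"
  by (metis ext)

lemma zV_sum:
  assumes "finite I" "\<And>i. i \<in> I \<Longrightarrow> zero_in_V n r (f i)"
  shows "zero_in_V n r (\<lambda>w. \<Sum>i\<in>I. f i w)"
  using assms
proof (induction I rule: finite_induct)
  case empty
  then show ?case by (simp add: zV_zero)
next
  case (insert x F)
  then show ?case by (simp add: zV_add)
qed

lemma shift_Cons: "shift (x # a) (Suc i) j = x # shift a i j"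
  by (simp add: shift_def)

lemma rel_vec_Cons: "rel_vec r (x # a) (Suc i) w = (case w of [] \<Rightarrow> 0 | h # t \<Rightarrow> if h = x then rel_vec r a i t else 0)"
  by (cases w) (auto simp: rel_vec_def shift_Cons)

lemma zV_lift:
  assumes "zero_in_V n r u"
  shows "zero_in_V (Suc n) r (\<lambda>w. case w of [] \<Rightarrow> 0 | h # t \<Rightarrow> if h = x then u t else 0)"
proof -
  obtain G c where 1: "finite G" "\<forall>p\<in>G. valid_rel n r (fst p) (snd p)"
    "\<forall>b. u b = (\<Sum>p\<in>G. c p * rel_vec r (fst p) (snd p) b)" using assms unfolding zV_alt by blast
  let ?h = "\<lambda>p. (x # fst p, Suc (snd p))"
  have inj: "inj_on ?h G" by (auto simp: inj_on_def prod_eq_iff)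
  have "(case w of [] \<Rightarrow> 0 | h # t \<Rightarrow> if h = x then u t else 0) =
     (\<Sum>p\<in>?h ` G. c (tl (fst p), snd p - 1) * rel_vec r (fst p) (snd p) w)" for w
    unfolding sum.reindex[OF inj] using 1(3)
    by (cases w) (auto simp: rel_vec_Cons sum_distrib_left)
  moreover have "\<forall>p\<in>?h ` G. valid_rel (Suc n) r (fst p) (snd p)"
    using 1(2) by (auto simp: valid_rel_def)
  ultimately show ?thesis unfolding zV_alt using 1(1)
    by (intro exI[of _ "?h ` G"] exI[of _ "\<lambda>p. c (tl (fst p), snd p - 1)"]) auto
qed

lemma c2_eqI: "(\<And>s t. c2 p s t = c2 q s t) \<Longrightarrow> p = q"
  unfolding c2_def by (intro poly_eqI) auto

lemma c2_sum: "c2 (\<Sum>x\<in>S. f x) s t = (\<Sum>x\<in>S. c2 (f x) s t)"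
  unfolding c2_def by (simp add: coeff_sum)

definition MM :: "nat \<Rightarrow> nat \<Rightarrow> p2" where "MM i k = XX ^ i * YY ^ k"

lemma c2_MM: "c2 (MM i k * p) s t = (if i \<le> s \<and> k \<le> t then c2 p (s - i) (t - k) else 0)"
proof -
  have Y: "c2 (YY ^ k * p) s t = (if k \<le> t then c2 p s (t - k) else 0)" for s t
    by (induction k arbitrary: t) (auto simp: mult.assoc)
  have "c2 (XX ^ i * q) s t = (if i \<le> s then c2 q (s - i) t else 0)" for q s
    by (induction i arbitrary: s) (auto simp: mult.assoc)
  then show ?thesis unfolding MM_def by (simp add: mult.assoc Y)
qed

lemma expand2:
  assumes "finite \<Omega>" "\<And>s t. c2 A s t \<noteq> 0 \<Longrightarrow> (s, t) \<in> \<Omega>"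
  shows "A * P = (\<Sum>x\<in>\<Omega>. CC (c2 A (fst x) (snd x)) * (MM (fst x) (snd x) * P))"
proof -
  have "A = (\<Sum>x\<in>\<Omega>. CC (c2 A (fst x) (snd x)) * MM (fst x) (snd x))"
  proof (rule c2_eqI)
    fix s t
    have "c2 (\<Sum>x\<in>\<Omega>. CC (c2 A (fst x) (snd x)) * MM (fst x) (snd x)) s t
       = (\<Sum>x\<in>\<Omega>. if x = (s, t) then c2 A s t else 0)"
      unfolding c2_sum using c2_MM[where p = 1]
      by (intro sum.cong) (auto simp: c2_1)
    also have "\<dots> = c2 A s t" using assms by (auto simp: sum.delta')
    finally show "c2 A s t = c2 (\<Sum>x\<in>\<Omega>. CC (c2 A (fst x) (snd x)) * MM (fst x) (snd x)) s t" by simp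
  qed
  then have "A * P = (\<Sum>x\<in>\<Omega>. CC (c2 A (fst x) (snd x)) * MM (fst x) (snd x)) * P" by simp
  then show ?thesis by (simp add: sum_distrib_right mult.assoc)
qed

lemma sum_img:
  assumes "finite \<Omega>" "h ` S \<subseteq> \<Omega>" "inj_on h S" "\<And>x. x \<in> \<Omega> \<Longrightarrow> g x \<noteq> 0 \<Longrightarrow> x \<in> h ` S"
  shows "sum g \<Omega> = sum (g \<circ> h) S"
proof -
  have "sum g \<Omega> = sum g (h ` S)"
    using assms by (intro sum.mono_neutral_right) auto
  also have "\<dots> = sum (g \<circ> h) S" using assms(3) by (rule sum.reindex)
  finally show ?thesis .
qed

lemma coeff_Rp_std: "coeff (Rp c (1 - int c)) j = (-1)^j * qbinom (int c) j"
  by (simp add: coeff_Rp)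



lemma step:
  fixes n r b :: nat and v :: "nat list"
  assumes n2: "2 \<le> n" and r1: "1 \<le> r" and b1: "1 \<le> b"
  and IH: "\<And>u. length u = n \<Longrightarrow> b \<le> u!0 \<Longrightarrow> zero_in_V n r (\<lambda>w. \<Sum>j\<le>b. (-1)^j * qbinom (int b) j *
           (if w = u[0 := u!0 - j, n-1 := u!(n-1) + j] then 1 else 0))"
  and lv: "length v = Suc n" and v0: "r + b - 1 \<le> v!0"
  shows "zero_in_V (Suc n) r (\<lambda>w. \<Sum>j\<le>r+b-1. (-1)^j * qbinom (int (r+b-1)) j *
           (if w = v[0 := v!0 - j, n := v!n + j] then 1 else 0))"
proof -
  define N where "N = r + b - 1"
  define e where "e = 1 - int r"
  define f where "f = 1 - int b"
  obtain A B where eq: "Rxy (r + b - 1) (e + f) = A * Rx r e + B * Ry b f"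
    and SA: "\<forall>s t. c2 A s t \<noteq> 0 \<longrightarrow> t \<le> s \<and> s < b"
    and SB: "\<forall>s t. c2 B s t \<noteq> 0 \<longrightarrow> t + b \<le> s \<and> s < r + b"
    using twovar[of r b e f] r1 by auto
  have ef: "e + f = 1 - int N" using r1 b1 by (simp add: e_def f_def N_def of_nat_diff)
  obtain x0 v' where vv: "v = x0 # v'" using lv by (cases v) auto
  have lv': "length v' = n" using lv vv by simp
  define mv where "mv s t = (x0 - s) # v'[0 := v'!0 + s - t, n - 1 := v'!(n-1) + t]" for s t
  define \<Omega> where "\<Omega> = {x::nat\<times>nat. snd x \<le> fst x \<and> fst x \<le> N}"
  have fin: "finite \<Omega>"
    by (rule finite_subset[of _ "{..N} \<times> {..N}"]) (auto simp: \<Omega>_def)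
  define Vec where "Vec p w = (\<Sum>x\<in>\<Omega>. c2 p (fst x) (snd x) * (if w = mv (fst x) (snd x) then 1 else 0))" for p w
  have Vec_add: "Vec (p + q) w = Vec p w + Vec q w" for p q w
    by (simp add: Vec_def distrib_right sum.distrib)
  have Vec_sum: "Vec (\<Sum>x\<in>\<Omega>. CC (k x) * p x) w = (\<Sum>x\<in>\<Omega>. k x * Vec (p x) w)" for k p w
    unfolding Vec_def c2_sum c2_C sum_distrib_right sum_distrib_left mult.assoc by (rule sum.swap)
  have ZP: "zero_in_V (Suc n) r (Vec (C * P))"
    if supp: "\<And>s t. c2 C s t \<noteq> 0 \<Longrightarrow> (s, t) \<in> \<Omega>"
    and each: "\<And>s t. c2 C s t \<noteq> 0 \<Longrightarrow> zero_in_V (Suc n) r (Vec (MM s t * P))" for C P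
  proof -
    have "Vec (C * P) = (\<lambda>w. \<Sum>x\<in>\<Omega>. c2 C (fst x) (snd x) * Vec (MM (fst x) (snd x) * P) w)"
      by (rule ext, subst expand2[OF fin supp]) (auto simp: Vec_sum)
    moreover have "zero_in_V (Suc n) r (\<lambda>w. \<Sum>x\<in>\<Omega>. c2 C (fst x) (snd x) * Vec (MM (fst x) (snd x) * P) w)"
    proof (rule zV_sum[OF fin])
      fix x assume "x \<in> \<Omega>"
      show "zero_in_V (Suc n) r (\<lambda>w. c2 C (fst x) (snd x) * Vec (MM (fst x) (snd x) * P) w)"
      proof (cases "c2 C (fst x) (snd x) = 0")
        case True then show ?thesis by (simp add: zV_zero)
      next
        case False then show ?thesis using each by (intro zV_scale) auto
      qed
    qed
    ultimately show ?thesis by simp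
  qed
  have ZA: "zero_in_V (Suc n) r (Vec (A * Rx r e))"
  proof (rule ZP)
    fix s t assume "c2 A s t \<noteq> 0"
    then show "(s, t) \<in> \<Omega>" using SA[rule_format, of s t] r1 by (auto simp: \<Omega>_def N_def)
  next
    fix i k assume "c2 A i k \<noteq> 0"
    then have ik: "k \<le> i" "i < b" using SA[rule_format, of i k] by auto
    have "Vec (MM i k * Rx r e) w = rel_vec r (mv i k) 0 w" for w
    proof -
      let ?g = "\<lambda>x. c2 (MM i k * Rx r e) (fst x) (snd x) * (if w = mv (fst x) (snd x) then 1 else 0)"
      let ?h = "\<lambda>j. (i + j, k)"
      have "Vec (MM i k * Rx r e) w = sum (?g \<circ> ?h) {..r}"
        unfolding Vec_def
      proof (rule sum_img[OF fin])
        show "?h ` {..r} \<subseteq> \<Omega>" using ik by (auto simp: \<Omega>_def N_def)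
        show "inj_on ?h {..r}" by (auto simp: inj_on_def)
        fix x assume "x \<in> \<Omega>" "?g x \<noteq> 0"
        then have "i \<le> fst x" "snd x = k" "coeff (Rp r e) (fst x - i) \<noteq> 0"
          by (auto simp: c2_MM c2_Rx split: if_splits)
        then have "fst x - i \<le> r" using coeff_Rp_le by blast
        then show "x \<in> ?h ` {..r}" using \<open>i \<le> fst x\<close> \<open>snd x = k\<close>
          by (intro image_eqI[of _ _ "fst x - i"]) auto
      qed
      also have "\<dots> = (\<Sum>j\<le>r. (-1)^j * qbinom (int r) j * (if w = shift (mv i k) 0 j then 1 else 0))"
      proof (rule sum.cong[OF refl])
        fix j assume "j \<in> {..r}"
        have "mv (i + j) k = shift (mv i k) 0 j"
          unfolding mv_def shift_def using n2 lv' ik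
          by (intro nth_equalityI) (auto simp: nth_list_update nth_Cons' split: if_splits)
        then show "(?g \<circ> ?h) j = (-1)^j * qbinom (int r) j * (if w = shift (mv i k) 0 j then 1 else 0)"
          by (simp add: c2_MM c2_Rx e_def coeff_Rp_std)
      qed
      also have "\<dots> = rel_vec r (mv i k) 0 w" by (simp add: rel_vec_def)
      finally show ?thesis .
    qed
    moreover have "valid_rel (Suc n) r (mv i k) 0"
      using lv' v0 ik n2 vv by (auto simp: valid_rel_def mv_def)
    ultimately show "zero_in_V (Suc n) r (Vec (MM i k * Rx r e))"
      using zV_rel by (metis ext)
  qed
  have ZB: "zero_in_V (Suc n) r (Vec (B * Ry b f))"
  proof (rule ZP)
    fix s t assume "c2 B s t \<noteq> 0"
    then show "(s, t) \<in> \<Omega>" using SB[rule_format, of s t] r1 by (auto simp: \<Omega>_def N_def)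
  next
    fix i k assume "c2 B i k \<noteq> 0"
    then have ik: "k + b \<le> i" "i < r + b" using SB[rule_format, of i k] by auto
    define U where "U = v'[0 := v'!0 + i - k, n - 1 := v'!(n-1) + k]"
    have lU: "length U = n" using lv' by (simp add: U_def)
    have U0: "b \<le> U!0" using ik n2 lv' by (simp add: U_def nth_list_update)
    define IV where "IV t = (\<Sum>j\<le>b. (-1)^j * qbinom (int b) j *
           (if t = U[0 := U!0 - j, n-1 := U!(n-1) + j] then 1 else 0))" for t
    have ZIV: "zero_in_V n r IV" using IH[OF lU U0] unfolding IV_def by (simp add: fun_eq_iff)
    have "Vec (MM i k * Ry b f) w = (case w of [] \<Rightarrow> 0 | h # t \<Rightarrow> if h = x0 - i then IV t else 0)" for w
    proof -
      let ?g = "\<lambda>x. c2 (MM i k * Ry b f) (fst x) (snd x) * (if w = mv (fst x) (snd x) then 1 else 0)"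
      let ?h = "\<lambda>j. (i, k + j)"
      have "Vec (MM i k * Ry b f) w = sum (?g \<circ> ?h) {..b}"
        unfolding Vec_def
      proof (rule sum_img[OF fin])
        show "?h ` {..b} \<subseteq> \<Omega>" using ik by (auto simp: \<Omega>_def N_def)
        show "inj_on ?h {..b}" by (auto simp: inj_on_def)
        fix x assume "x \<in> \<Omega>" "?g x \<noteq> 0"
        then have "fst x = i" "k \<le> snd x" "coeff (Rp b f) (snd x - k) \<noteq> 0"
          by (auto simp: c2_MM c2_Ry split: if_splits)
        then have "snd x - k \<le> b" using coeff_Rp_le by blast
        then show "x \<in> ?h ` {..b}" using \<open>fst x = i\<close> \<open>k \<le> snd x\<close>
          by (intro image_eqI[of _ _ "snd x - k"]) auto
      qed
      also have "\<dots> = (\<Sum>j\<le>b. (-1)^j * qbinom (int b) j * (if w = (x0 - i) # U[0 := U!0 - j, n-1 := U!(n-1) + j] then 1 else 0))"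
      proof (rule sum.cong[OF refl])
        fix j assume "j \<in> {..b}"
        have "mv i (k + j) = (x0 - i) # U[0 := U!0 - j, n-1 := U!(n-1) + j]"
          unfolding mv_def U_def using n2 lv' ik
          by (intro nth_equalityI) (auto simp: nth_list_update nth_Cons' split: if_splits)
        then show "(?g \<circ> ?h) j = (-1)^j * qbinom (int b) j * (if w = (x0 - i) # U[0 := U!0 - j, n-1 := U!(n-1) + j] then 1 else 0)"
          by (simp add: c2_MM c2_Ry f_def coeff_Rp_std)
      qed
      also have "\<dots> = (case w of [] \<Rightarrow> 0 | h # t \<Rightarrow> if h = x0 - i then IV t else 0)"
        by (cases w) (auto simp: IV_def)
      finally show ?thesis .
    qed
    then show "zero_in_V (Suc n) r (Vec (MM i k * Ry b f))"
      using zV_lift[OF ZIV, of "x0 - i"] by (metis ext)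
  qed
  have T: "(\<Sum>j\<le>r+b-1. (-1)^j * qbinom (int (r+b-1)) j * (if w = v[0 := v!0 - j, n := v!n + j] then 1 else 0))
     = Vec (Rxy N (1 - int N)) w" for w
  proof -
    let ?g = "\<lambda>x. c2 (Rxy N (1 - int N)) (fst x) (snd x) * (if w = mv (fst x) (snd x) then 1 else 0)"
    let ?h = "\<lambda>j. (j, j)"
    have "Vec (Rxy N (1 - int N)) w = sum (?g \<circ> ?h) {..N}"
      unfolding Vec_def
    proof (rule sum_img[OF fin])
      show "?h ` {..N} \<subseteq> \<Omega>" by (auto simp: \<Omega>_def)
      show "inj_on ?h {..N}" by (auto simp: inj_on_def)
      fix x assume "x \<in> \<Omega>" "?g x \<noteq> 0"
      then show "x \<in> ?h ` {..N}" by (cases x) (auto simp: c2_Rxy \<Omega>_def split: if_splits)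
    qed
    also have "\<dots> = (\<Sum>j\<le>N. (-1)^j * qbinom (int N) j * (if w = v[0 := v!0 - j, n := v!n + j] then 1 else 0))"
    proof (rule sum.cong[OF refl])
      fix j assume "j \<in> {..N}"
      have "mv j j = v[0 := v!0 - j, n := v!n + j]"
        unfolding mv_def vv using n2 lv'
        by (intro nth_equalityI) (auto simp: nth_list_update nth_Cons' split: if_splits nat.splits)
      then show "(?g \<circ> ?h) j = (-1)^j * qbinom (int N) j * (if w = v[0 := v!0 - j, n := v!n + j] then 1 else 0)"
        by (simp add: c2_Rxy coeff_Rp_std)
    qed
    finally show ?thesis by (simp add: N_def)
  qed
  have "Vec (Rxy N (1 - int N)) w = Vec (A * Rx r e) w + Vec (B * Ry b f) w" for w
    using eq ef by (simp add: N_def Vec_add)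
  then show ?thesis using zV_add[OF ZA ZB] T by (metis (no_types, lifting) ext)
qed



lemma prod_qfact: "m \<le> c \<Longrightarrow> (\<Prod>t<m. qint (int c - int t)) * qfact (c - m) = qfact c"
proof (induction m)
  case 0 then show ?case by simp
next
  case (Suc m)
  have "c - m = Suc (c - Suc m)" using Suc.prems by simp
  then have "qfact (c - m) = qfact (c - Suc m) * qint (int c - int m)"
    using Suc.prems by (simp add: qfact_Suc of_nat_diff)
  then show ?case using Suc by (simp add: mult_ac)
qed

lemma qbinom_fact: "m \<le> c \<Longrightarrow> qbinom (int c) m = qfact c / (qfact m * qfact (c - m))"
  using prod_qfact[of m c] qfact_ne0[of "c - m"] qfact_ne0[of m]
  by (auto simp: qbinom_def field_simps)

lemma qbinom_sym: "j \<le> c \<Longrightarrow> qbinom (int c) (c - j) = qbinom (int c) j"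
  by (simp add: qbinom_fact mult.commute)

lemma Sthm:
  fixes r :: nat assumes r2: "2 \<le> r"
  shows "2 \<le> m \<Longrightarrow> \<forall>v. length v = m \<longrightarrow> (m - 1) * (r - 1) + 1 \<le> v!0 \<longrightarrow>
     zero_in_V m r (\<lambda>w. \<Sum>j\<le>(m - 1) * (r - 1) + 1. (-1)^j * qbinom (int ((m - 1) * (r - 1) + 1)) j *
           (if w = v[0 := v!0 - j, m-1 := v!(m-1) + j] then 1 else 0))"
proof (induction m rule: nat_induct_at_least)
  case base
  show ?case
  proof (intro allI impI)
    fix v :: "nat list" assume v: "length v = 2" "(2 - 1) * (r - 1) + 1 \<le> v!0"
    have r: "(2 - 1) * (r - 1) + 1 = r" using r2 by simp
    have "valid_rel 2 r v 0" using v r by (simp add: valid_rel_def)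
    then have "zero_in_V 2 r (rel_vec r v 0)" by (rule zV_rel)
    moreover have "rel_vec r v 0 = (\<lambda>w. \<Sum>j\<le>(2 - 1) * (r - 1) + 1. (-1)^j * qbinom (int ((2 - 1) * (r - 1) + 1)) j *
           (if w = v[0 := v!0 - j, 2-1 := v!(2-1) + j] then 1 else 0))"
      unfolding r by (simp add: rel_vec_def shift_def fun_eq_iff)
    ultimately show "zero_in_V 2 r (\<lambda>w. \<Sum>j\<le>(2 - 1) * (r - 1) + 1. (-1)^j * qbinom (int ((2 - 1) * (r - 1) + 1)) j *
           (if w = v[0 := v!0 - j, 2-1 := v!(2-1) + j] then 1 else 0))" by simp
  qed
next
  case (Suc m)
  define b where "b = (m - 1) * (r - 1) + 1"
  obtain m' r' where mr: "m = Suc m'" "r = Suc r'" using r2 Suc.hyps by (cases m; cases r) auto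
  have eqL: "(Suc m - 1) * (r - 1) + 1 = r + b - 1" unfolding b_def mr by simp
  show ?case
  proof (intro allI impI)
    fix v :: "nat list" assume v: "length v = Suc m" "(Suc m - 1) * (r - 1) + 1 \<le> v!0"
    have "zero_in_V (Suc m) r (\<lambda>w. \<Sum>j\<le>r+b-1. (-1)^j * qbinom (int (r+b-1)) j *
           (if w = v[0 := v!0 - j, m := v!m + j] then 1 else 0))"
      using step[of m r b v] Suc.hyps Suc.IH r2 v eqL unfolding b_def by auto
    then show "zero_in_V (Suc m) r (\<lambda>w. \<Sum>j\<le>(Suc m - 1) * (r - 1) + 1. (-1)^j * qbinom (int ((Suc m - 1) * (r - 1) + 1)) j *
           (if w = v[0 := v!0 - j, Suc m-1 := v!(Suc m-1) + j] then 1 else 0))"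
      unfolding eqL by simp
  qed
qed



theorem proposition5p11:
  fixes n r L :: nat
  assumes "n \<ge> 2" and "r \<ge> 2" and "L = (n - 1) * (r - 1) + 1"
  shows "zero_in_V n r (\<lambda>b. \<Sum>k\<le>L. (-1) ^ k * qbinom (int L) k *
            (if b = [k] @ replicate (n - 2) 0 @ [L - k] then 1 else 0))"
proof -
  define v where "v = L # replicate (n - 1) 0"
  have lv: "length v = n" using assms by (simp add: v_def)
  have Z: "zero_in_V n r (\<lambda>w. \<Sum>j\<le>L. (-1)^j * qbinom (int L) j *
           (if w = v[0 := v!0 - j, n-1 := v!(n-1) + j] then 1 else 0))"
  proof -
    have S: "\<forall>v. length v = n \<longrightarrow> L \<le> v!0 \<longrightarrow> zero_in_V n r (\<lambda>w. \<Sum>j\<le>L. (-1)^j * qbinom (int L) j *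
           (if w = v[0 := v!0 - j, n-1 := v!(n-1) + j] then 1 else 0))"
      using Sthm[OF assms(2) assms(1)] unfolding assms(3)[symmetric] .
    have "L \<le> v!0" by (simp add: v_def)
    from S[rule_format, OF lv this] show ?thesis .
  qed
  have vj: "v[0 := v!0 - j, n-1 := v!(n-1) + j] = [L - j] @ replicate (n - 2) 0 @ [j]" for j
  proof -
    obtain n' where n': "n = Suc (Suc n')" using assms(1) by (cases n; cases "n - 1") auto
    have r1: "replicate (Suc n') (0::nat) = replicate n' 0 @ [0]" by (simp add: replicate_append_same)
    have "(replicate (Suc n') (0::nat))[n' := j] = replicate n' 0 @ [j]"
      unfolding r1 by (metis length_replicate list_update_length)
    note rep = this
    have v1: "v!0 = L" "v!(n-1) = 0" by (simp_all add: v_def n' nth_Cons')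
    have "v[0 := v!0 - j, n-1 := v!(n-1) + j] = v[0 := L - j, Suc n' := j]" using v1 n' by simp
    also have "\<dots> = ((L - j) # replicate (Suc n') 0)[Suc n' := j]" using n' by (simp only: v_def list_update_code(2) diff_Suc_1)
    also have "\<dots> = (L - j) # (replicate (Suc n') 0)[n' := j]" by (simp only: list_update_code(3))
    also have "\<dots> = [L - j] @ replicate (n - 2) 0 @ [j]" using rep n' by simp
    finally show ?thesis .
  qed
  have "(\<Sum>k\<le>L. (-1) ^ k * qbinom (int L) k * (if w = [k] @ replicate (n - 2) 0 @ [L - k] then 1 else 0))
      = (\<Sum>j\<le>L. (-1) ^ (L - j) * qbinom (int L) (L - j) * (if w = [L - j] @ replicate (n - 2) 0 @ [L - (L - j)] then 1 else 0))" for w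
    by (rule sum.reindex_bij_witness[where i = "\<lambda>j. L - j" and j = "\<lambda>j. L - j"]) (simp_all add: atMost_iff)
  also have "\<dots> w = (-1)^L * (\<Sum>j\<le>L. (-1)^j * qbinom (int L) j *
           (if w = v[0 := v!0 - j, n-1 := v!(n-1) + j] then 1 else 0))" for w
  proof -
    have "(-1::qfield) ^ (L - j) = (-1)^L * (-1)^j" if "j \<le> L" for j
    proof -
      have a: "(-1::qfield) ^ L = (-1) ^ (L - j) * (-1)^j" using that by (metis le_add_diff_inverse2 power_add)
      have b: "(-1::qfield)^j * (-1)^j = 1" by (simp add: power_mult_distrib[symmetric])
      have "(-1::qfield) ^ (L - j) = (-1)^(L-j) * ((-1)^j * (-1)^j)" by (simp only: b mult_1_right)
      also have "\<dots> = ((-1)^(L-j) * (-1)^j) * (-1)^j" by (simp only: mult.assoc)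
      also have "\<dots> = (-1)^L * (-1)^j" by (simp only: a)
      finally show ?thesis .
    qed
    note sg = this
    show ?thesis unfolding sum_distrib_left
    proof (rule sum.cong[OF refl])
      fix j assume "j \<in> {..L}"
      then have j: "j \<le> L" by simp
      have "L - (L - j) = j" using j by simp
      then show "(-1) ^ (L - j) * qbinom (int L) (L - j) * (if w = [L - j] @ replicate (n - 2) 0 @ [L - (L - j)] then 1 else 0)
        = (-1)^L * ((-1)^j * qbinom (int L) j * (if w = v[0 := v!0 - j, n-1 := v!(n-1) + j] then 1 else 0))"
        unfolding vj sg[OF j] qbinom_sym[OF j] by (simp only: mult.assoc)
    qed
  qed
  finally have "(\<lambda>w. \<Sum>k\<le>L. (-1) ^ k * qbinom (int L) k * (if w = [k] @ replicate (n - 2) 0 @ [L - k] then 1 else 0))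
     = (\<lambda>w. (-1)^L * (\<Sum>j\<le>L. (-1)^j * qbinom (int L) j *
           (if w = v[0 := v!0 - j, n-1 := v!(n-1) + j] then 1 else 0)))" by (simp add: fun_eq_iff)
  then show ?thesis using zV_scale[OF Z] by simp
qed

end
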